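(* Fix $n\in\mathbb N$. The measures $\{\mathbf P^n_x\}_{x\in\mathbb Z_{\ge0}}$ can be coupled on a common probability space, with coordinate processes $(S^x_k)_{k=0}^n$ of law $\mathbf P^n_x$, in such a way that almost surely $|S^{x+1}_k-S^x_k|=1$ for all $x\ge0$ and all $0\le k\le n$. In particular, for all $x,y\ge0$, $\sup_{k\le n}|S^x_k-S^y_k|\le|x-y|$ almost surely.
   Context: $\mathbf P^n_x$ is the uniform probability measure on the finite set of paths $(s_0,\dots,s_n)\in\mathbb Z_{\ge0}^{n+1}$ with $s_0=x$ and $|s_{i+1}-s_i|=1$ for all $i$ (simple symmetric random walk conditioned to stay non-negative up to time $n$). *)

theory Defs
  imports "HOL-Probability.Probability"
begin

definition nonneg_paths :: "nat \<Rightarrow> int \<Rightarrow> int list set" where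
  "nonneg_paths n x = {s. length s = Suc n \<and> s ! 0 = x \<and> (\<forall>i\<le>n. 0 \<le> s ! i)
      \<and> (\<forall>i<n. \<bar>s ! Suc i - s ! i\<bar> = 1)}"

definition Pn :: "nat \<Rightarrow> int \<Rightarrow> int list pmf" where
  "Pn n x = pmf_of_set (nonneg_paths n x)"

end

theory Submission
  imports Defs
begin


abbreviation "NP \<equiv> nonneg_paths"

lemma np0: "nonneg_paths 0 y = (if 0 \<le> y then {[y]} else {})"
  unfolding nonneg_paths_def by (auto simp: length_Suc_conv)

lemma npS: "nonneg_paths (Suc m) y =
   (if 0 \<le> y then Cons y ` (nonneg_paths m (y+1) \<union> nonneg_paths m (y-1)) else {})"
proof (cases "0 \<le> y")
  case False thus ?thesis unfolding nonneg_paths_def by auto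
next
  case True
  have "s \<in> Cons y ` (nonneg_paths m (y+1) \<union> nonneg_paths m (y-1))"
    if s: "s \<in> nonneg_paths (Suc m) y" for s
  proof -
    from s have len: "length s = Suc (Suc m)" and s0: "s!0 = y"
      and nn: "\<forall>i\<le>Suc m. 0 \<le> s!i" and st: "\<forall>i<Suc m. \<bar>s!Suc i - s!i\<bar> = 1"
      unfolding nonneg_paths_def mem_Collect_eq by blast+
    from len obtain a t where st_def: "s = a # t" "length t = Suc m" by (auto simp: length_Suc_conv)
    have a: "a = y" using s0 st_def by simp
    have "\<bar>t!0 - y\<bar> = 1" using st[rule_format, of 0] st_def a by simp
    hence t0: "t!0 = y+1 \<or> t!0 = y-1" by arith
    have tn: "\<forall>i\<le>m. 0 \<le> t!i"
    proof (intro allI impI)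
      fix i assume "i \<le> m" hence "0 \<le> s!Suc i" using nn by simp
      thus "0 \<le> t!i" by (simp add: st_def)
    qed
    have ts: "\<forall>i<m. \<bar>t!Suc i - t!i\<bar> = 1"
    proof (intro allI impI)
      fix i assume "i < m" hence "\<bar>s!Suc (Suc i) - s!Suc i\<bar> = 1" using st by simp
      thus "\<bar>t!Suc i - t!i\<bar> = 1" by (simp add: st_def)
    qed
    have "t \<in> nonneg_paths m (y+1) \<union> nonneg_paths m (y-1)"
      using t0 tn ts st_def(2) unfolding nonneg_paths_def Un_iff mem_Collect_eq by blast
    thus ?thesis using st_def a by auto
  qed
  moreover have "y # t \<in> nonneg_paths (Suc m) y"
    if t: "t \<in> nonneg_paths m (y+1) \<union> nonneg_paths m (y-1)" for t
  proof -
    from t have len: "length t = Suc m" and t0: "t!0 = y+1 \<or> t!0 = y-1"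
      and nn: "\<forall>i\<le>m. 0 \<le> t!i" and st: "\<forall>i<m. \<bar>t!Suc i - t!i\<bar> = 1"
      unfolding nonneg_paths_def Un_iff mem_Collect_eq by blast+
    have A: "\<forall>i\<le>Suc m. 0 \<le> (y#t)!i"
    proof (intro allI impI)
      fix i assume "i \<le> Suc m" thus "0 \<le> (y#t)!i" using True nn by (cases i) auto
    qed
    have B: "\<forall>i<Suc m. \<bar>(y#t)!Suc i - (y#t)!i\<bar> = 1"
    proof (intro allI impI)
      fix i assume "i < Suc m" thus "\<bar>(y#t)!Suc i - (y#t)!i\<bar> = 1" using t0 st by (cases i) auto
    qed
    show ?thesis using A B len True unfolding nonneg_paths_def mem_Collect_eq by simp
  qed
  ultimately have "nonneg_paths (Suc m) y = Cons y ` (nonneg_paths m (y+1) \<union> nonneg_paths m (y-1))"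
    by (intro equalityI subsetI) auto
  thus ?thesis using True by simp
qed



lemma np_neg: "y < 0 \<Longrightarrow> nonneg_paths m y = {}"
  unfolding nonneg_paths_def by auto

lemma np_fin_ne: "finite (nonneg_paths m y) \<and> (0 \<le> y \<longrightarrow> nonneg_paths m y \<noteq> {})"
proof (induction m arbitrary: y)
  case 0 thus ?case by (simp add: np0)
next
  case (Suc m) thus ?case by (simp add: npS)
qed

lemma np_fin: "finite (nonneg_paths m y)" using np_fin_ne by blast
lemma np_ne: "0 \<le> y \<Longrightarrow> nonneg_paths m y \<noteq> {}" using np_fin_ne by blast

lemma np_disj: "y \<noteq> z \<Longrightarrow> nonneg_paths m y \<inter> nonneg_paths m z = {}"
  unfolding nonneg_paths_def by auto

definition N :: "nat \<Rightarrow> int \<Rightarrow> nat" where "N m y = card (nonneg_paths m y)"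

lemma N0: "N 0 y = (if 0 \<le> y then 1 else 0)" by (simp add: N_def np0)

lemma NS: "N (Suc m) y = (if 0 \<le> y then N m (y+1) + N m (y-1) else 0)"
proof (cases "0 \<le> y")
  case True
  have "N (Suc m) y = card (nonneg_paths m (y+1) \<union> nonneg_paths m (y-1))"
    unfolding N_def npS using True by (simp add: card_image)
  also have "\<dots> = N m (y+1) + N m (y-1)" unfolding N_def
    by (rule card_Un_disjoint) (auto simp: np_fin np_disj)
  finally show ?thesis using True by simp
qed (simp add: N_def npS)

lemma N_neg: "y < 0 \<Longrightarrow> N m y = 0" by (simp add: N_def np_neg)
lemma N_pos: "0 \<le> y \<Longrightarrow> 0 < N m y" by (simp add: N_def np_fin np_ne card_gt_0_iff)

lemma N_mono: "-1 \<le> y \<Longrightarrow> N m y \<le> N m (y+1)"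
proof (induction m arbitrary: y)
  case 0 thus ?case by (simp add: N0)
next
  case (Suc m)
  show ?case
  proof (cases "y = -1")
    case True thus ?thesis by (simp add: NS)
  next
    case False
    hence "0 \<le> y" using Suc.prems by simp
    moreover have "N m (y+1) \<le> N m (y+2)" using Suc.IH[of "y+1"] \<open>0 \<le> y\<close> by (simp add: add.assoc)
    moreover have "N m (y-1) \<le> N m y" using Suc.IH[of "y-1"] \<open>0 \<le> y\<close> by simp
    ultimately show ?thesis by (simp add: NS add.assoc)
  qed
qed

lemma N_conc: "-1 \<le> y \<Longrightarrow> N m y + N m (y+2) \<le> 2 * N m (y+1)"
proof (induction m arbitrary: y)
  case 0 thus ?case by (simp add: N0)
next
  case (Suc m)
  show ?case
  proof (cases "y = -1")
    case True
    have "N m 0 + N m 2 \<le> 2 * N m 1" using Suc.IH[of 0] by simp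
    thus ?thesis using True by (simp add: NS N_neg)
  next
    case False
    hence y: "0 \<le> y" using Suc.prems by simp
    have "N m (y+1) + N m (y+3) \<le> 2 * N m (y+2)" using Suc.IH[of "y+1"] y by (simp add: add.assoc)
    moreover have "N m (y-1) + N m (y+1) \<le> 2 * N m y" using Suc.IH[of "y-1"] y by (simp add: algebra_simps)
    moreover have "N (Suc m) y = N m (y+1) + N m (y-1)" unfolding NS[of m y] using y by simp
    moreover have "N (Suc m) (y+2) = N m (y+3) + N m (y+1)"
    proof -
      have e: "y+2+1 = y+3" "y+2-1 = y+1" by simp_all
      show ?thesis unfolding NS[of m "y+2"] e using y by simp
    qed
    moreover have "N (Suc m) (y+1) = N m (y+2) + N m y"
    proof -
      have e: "y+1+1 = y+2" "y+1-1 = y" by simp_all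
      show ?thesis unfolding NS[of m "y+1"] e using y by simp
    qed
    ultimately show ?thesis by simp
  qed
qed

lemma N_prod: assumes "0 \<le> y" shows "N m (y+2) * N m (y-1) \<le> N m (y+1) * N m y"
proof -
  define a b c d where "a = int (N m (y-1))" "b = int (N m y)" "c = int (N m (y+1))" "d = int (N m (y+2))"
  have ab: "a \<le> b" using N_mono[of "y-1" m] assms unfolding a_b_c_d_def by simp
  have bc: "b \<le> c" using N_mono[of y m] assms unfolding a_b_c_d_def by simp
  have c1: "a + c \<le> 2*b" using N_conc[of "y-1" m] assms unfolding a_b_c_d_def by (simp add: algebra_simps)
  have c2: "b + d \<le> 2*c" using N_conc[of "y" m] assms unfolding a_b_c_d_def by (simp add: algebra_simps)
  have a0: "0 \<le> a" unfolding a_b_c_d_def by simp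
  have "a * d \<le> a * (2*c - b)" using c2 a0 by (intro mult_left_mono) auto
  also have "a * (c - b) \<le> a * (b - a)" using c1 a0 by (intro mult_left_mono) auto
  hence "a * (2*c - b) \<le> b * c"
  proof -
    have "a * (b - a) \<le> c * (b - a)" using ab bc by (intro mult_right_mono) auto
    thus ?thesis using \<open>a * (c - b) \<le> a * (b - a)\<close> by (simp add: algebra_simps)
  qed
  finally have "d * a \<le> c * b" by (simp add: mult.commute)
  thus ?thesis unfolding a_b_c_d_def by (metis of_nat_le_iff of_nat_mult)
qed



lemma pmf_of_set_mix:
  assumes fA: "finite A" and fB: "finite B" and dj: "A \<inter> B = {}" and ne: "A \<noteq> {}"
  shows "pmf_of_set (A \<union> B) = bind_pmf (bernoulli_pmf (card A / (card A + card B)))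
            (\<lambda>b. if b then pmf_of_set A else pmf_of_set B)"
proof (rule pmf_eqI)
  fix x
  let ?p = "real (card A) / (card A + card B)"
  have cA: "0 < card A" using fA ne by (simp add: card_gt_0_iff)
  have p0: "0 \<le> ?p" by auto
  have p1: "?p \<le> 1" using cA by (simp add: divide_le_eq_1)
  have cU: "card (A \<union> B) = card A + card B" using fA fB dj by (simp add: card_Un_disjoint)
  have "pmf (bind_pmf (bernoulli_pmf ?p) (\<lambda>b. if b then pmf_of_set A else pmf_of_set B)) x
      = pmf (pmf_of_set A) x * ?p + pmf (pmf_of_set B) x * (1 - ?p)"
    by (subst pmf_bind, subst integral_bernoulli_pmf[OF p0 p1]) simp
  also have "\<dots> = pmf (pmf_of_set (A \<union> B)) x"
  proof (cases "B = {}")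
    case True
    thus ?thesis using fA ne cA by simp
  next
    case False
    have "1 - ?p = real (card B) / (card A + card B)" using cA by (simp add: field_simps)
    have dp: "real (card A) + real (card B) \<noteq> 0" using cA by simp
    show ?thesis
    proof (cases "x \<in> A")
      case True
      hence "x \<notin> B" using dj by blast
      thus ?thesis using True fA fB ne False cU dp \<open>1 - ?p = _\<close> by (simp add: indicator_def field_simps)
    next
      case xA: False
      show ?thesis
      proof (cases "x \<in> B")
        case True
        thus ?thesis using xA fA fB ne False cU dp \<open>1 - ?p = _\<close> by (simp add: indicator_def field_simps)
      qed (use xA fA fB ne False in \<open>simp add: indicator_def\<close>)
    qed
  qed
  finally show "pmf (pmf_of_set (A \<union> B)) x = pmf (bind_pmf (bernoulli_pmf ?p) (\<lambda>b. if b then pmf_of_set A else pmf_of_set B)) x" by simp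
qed

lemma bern_couple:
  assumes "0 \<le> b" "b \<le> a" "a \<le> 1"
  shows "rel_pmf (\<lambda>u v. v \<longrightarrow> u) (bernoulli_pmf a) (bernoulli_pmf b)"
proof
  let ?pq = "bind_pmf (bernoulli_pmf a) (\<lambda>u. map_pmf (\<lambda>c. (u, u \<and> c)) (bernoulli_pmf (b/a)))"
  show "\<And>x y. (x, y) \<in> set_pmf ?pq \<Longrightarrow> y \<longrightarrow> x" by auto
  show "map_pmf fst ?pq = bernoulli_pmf a"
    by (simp add: map_bind_pmf pmf.map_comp o_def bind_return_pmf')
  have ba0: "0 \<le> b/a" and ba1: "b/a \<le> 1" using assms by (auto simp: divide_simps)
  show "map_pmf snd ?pq = bernoulli_pmf b"
  proof (rule pmf_eqI)
    fix i
    have "pmf (map_pmf snd ?pq) i = pmf (bind_pmf (bernoulli_pmf a) (\<lambda>u. map_pmf (\<lambda>c. u \<and> c) (bernoulli_pmf (b/a)))) i"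
      by (simp add: map_bind_pmf pmf.map_comp o_def)
    also have "\<dots> = pmf (bind_pmf (bernoulli_pmf a) (\<lambda>u. if u then bernoulli_pmf (b/a) else return_pmf False)) i"
      by (intro arg_cong[where f="\<lambda>p. pmf p i"] bind_pmf_cong) (auto simp: map_pmf_const)
    also have "\<dots> = pmf (bernoulli_pmf (b/a)) i * a + pmf (return_pmf False) i * (1 - a)"
      using assms by (simp add: pmf_bind del: pmf_return)
    also have "\<dots> = pmf (bernoulli_pmf b) i"
      using assms ba0 ba1 by (cases i; cases "a = 0") (auto simp: field_simps)
    finally show "pmf (map_pmf snd ?pq) i = pmf (bernoulli_pmf b) i" .
  qed
qed

lemma chain:
  fixes P :: "nat \<Rightarrow> 'a pmf"
  assumes R: "\<And>x. rel_pmf R (P x) (P (Suc x))"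
  shows "\<exists>G. (\<forall>L\<in>set_pmf G. length L = Suc j \<and> (\<forall>i<j. R (L!i) (L!Suc i)))
             \<and> (\<forall>i\<le>j. map_pmf (\<lambda>L. L!i) G = P i)"
proof (induction j)
  case 0
  show ?case by (rule exI[of _ "map_pmf (\<lambda>a. [a]) (P 0)"]) (auto simp: pmf.map_comp o_def)
next
  case (Suc j)
  then obtain G where G1: "\<forall>L\<in>set_pmf G. length L = Suc j \<and> (\<forall>i<j. R (L!i) (L!Suc i))"
    and G2: "\<forall>i\<le>j. map_pmf (\<lambda>L. L!i) G = P i" by blast
  have "rel_pmf (=) (map_pmf (\<lambda>L. L!j) G) (P j)" using G2 by (simp add: rel_pmf_reflI)
  hence r1: "rel_pmf (\<lambda>L s. L!j = s) G (P j)" by (simp add: pmf.rel_map)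
  have "rel_pmf ((\<lambda>L s. L!j = s) OO R) G (P (Suc j))"
    using r1 R[of j] by (simp add: pmf.rel_compp relcomppI)
  then obtain pq where pq1: "\<And>L t. (L, t) \<in> set_pmf pq \<Longrightarrow> ((\<lambda>L s. L!j = s) OO R) L t"
    and pq2: "map_pmf fst pq = G" and pq3: "map_pmf snd pq = P (Suc j)"
    by (auto elim: rel_pmf.cases)
  have inG: "L \<in> set_pmf G" if "(L, t) \<in> set_pmf pq" for L t
    using that pq2 by force
  define G' where "G' = map_pmf (\<lambda>(L, t). L @ [t]) pq"
  have A: "\<forall>L\<in>set_pmf G'. length L = Suc (Suc j) \<and> (\<forall>i<Suc j. R (L!i) (L!Suc i))"
  proof
    fix L' assume "L' \<in> set_pmf G'"
    then obtain L t where Lt: "(L, t) \<in> set_pmf pq" "L' = L @ [t]" unfolding G'_def by auto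
    have lenL: "length L = Suc j" and adjL: "\<forall>i<j. R (L!i) (L!Suc i)" using G1 inG[OF Lt(1)] by auto
    have Rt: "R (L!j) t" using pq1[OF Lt(1)] by auto
    show "length L' = Suc (Suc j) \<and> (\<forall>i<Suc j. R (L'!i) (L'!Suc i))"
    proof (intro conjI allI impI)
      show "length L' = Suc (Suc j)" using Lt lenL by simp
      fix i assume "i < Suc j"
      thus "R (L'!i) (L'!Suc i)"
        using Lt lenL adjL Rt by (cases "i = j") (auto simp: nth_append)
    qed
  qed
  have B: "\<forall>i\<le>Suc j. map_pmf (\<lambda>L. L!i) G' = P i"
  proof (intro allI impI)
    fix i assume i: "i \<le> Suc j"
    show "map_pmf (\<lambda>L. L!i) G' = P i"
    proof (cases "i = Suc j")
      case True
      have "map_pmf (\<lambda>L. L!i) G' = map_pmf snd pq" unfolding G'_def pmf.map_comp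
        using True by (intro map_pmf_cong) (auto dest!: inG simp: G1 nth_append)
      thus ?thesis using pq3 True by simp
    next
      case False
      hence "i \<le> j" using i by simp
      have "map_pmf (\<lambda>L. L!i) G' = map_pmf (\<lambda>L. L!i) (map_pmf fst pq)" unfolding G'_def pmf.map_comp
        using \<open>i \<le> j\<close> by (intro map_pmf_cong) (auto dest!: inG simp: G1 nth_append)
      thus ?thesis using pq2 G2 \<open>i \<le> j\<close> by simp
    qed
  qed
  show ?case using A B by blast
qed



definition adj :: "nat \<Rightarrow> int list \<Rightarrow> int list \<Rightarrow> bool" where
  "adj m s t \<longleftrightarrow> (\<forall>k\<le>m. \<bar>s!k - t!k\<bar> = 1)"

lemma adj_Cons: "\<bar>a - b\<bar> = 1 \<Longrightarrow> adj m s t \<Longrightarrow> adj (Suc m) (a#s) (b#t)"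
  unfolding adj_def
proof (intro allI impI)
  fix k assume "\<bar>a - b\<bar> = 1" "\<forall>k\<le>m. \<bar>s!k - t!k\<bar> = 1" "k \<le> Suc m"
  thus "\<bar>(a#s)!k - (b#t)!k\<bar> = 1" by (cases k) auto
qed

lemma adj_flip: "rel_pmf (adj m) p q \<Longrightarrow> rel_pmf (adj m) q p"
proof -
  assume "rel_pmf (adj m) p q"
  moreover have "conversep (adj m) = adj m" by (auto simp: fun_eq_iff adj_def abs_minus_commute)
  ultimately show ?thesis by (metis pmf.rel_flip)
qed

lemma Pn_Suc:
  assumes "0 \<le> y"
  shows "Pn (Suc m) y = map_pmf (Cons y) (bind_pmf (bernoulli_pmf (N m (y+1) / (N m (y+1) + N m (y-1))))
            (\<lambda>b. if b then Pn m (y+1) else Pn m (y-1)))"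
proof -
  let ?U = "nonneg_paths m (y+1) \<union> nonneg_paths m (y-1)"
  have ne: "nonneg_paths m (y+1) \<noteq> {}" using assms np_ne by simp
  have "Pn (Suc m) y = pmf_of_set (Cons y ` ?U)" unfolding Pn_def npS using assms by simp
  also have "\<dots> = map_pmf (Cons y) (pmf_of_set ?U)"
    by (rule map_pmf_of_set_inj[symmetric]) (use ne in \<open>auto simp: np_fin\<close>)
  also have "pmf_of_set ?U = bind_pmf (bernoulli_pmf (N m (y+1) / (N m (y+1) + N m (y-1))))
            (\<lambda>b. if b then Pn m (y+1) else Pn m (y-1))"
    unfolding N_def Pn_def by (rule pmf_of_set_mix) (auto simp: np_fin np_disj ne)
  finally show ?thesis .
qed

lemma couple: "0 \<le> y \<Longrightarrow> rel_pmf (adj m) (Pn m y) (Pn m (y+1))"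
proof (induction m arbitrary: y)
  case 0
  show ?case using 0 unfolding Pn_def np0 by (simp add: pmf_of_set_singleton rel_pmf_return_pmf1 adj_def)
next
  case (Suc m)
  have y: "0 \<le> y" by fact
  define a where "a = real (N m (y+1)) / (N m (y+1) + N m (y-1))"
  define b where "b = real (N m (y+2)) / (N m (y+2) + N m y)"
  have PA: "Pn (Suc m) y = map_pmf (Cons y) (bind_pmf (bernoulli_pmf a)
            (\<lambda>u. if u then Pn m (y+1) else Pn m (y-1)))" unfolding a_def using Pn_Suc[OF y] .
  have PB: "Pn (Suc m) (y+1) = map_pmf (Cons (y+1)) (bind_pmf (bernoulli_pmf b)
            (\<lambda>u. if u then Pn m (y+2) else Pn m y))"
  proof -
    have e: "y+1+1 = y+2" "y+1-1 = y" by simp_all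
    show ?thesis using Pn_Suc[of "y+1" m] y unfolding b_def e by simp
  qed
  have c1: "0 < N m (y+1)" "0 < N m (y+2)" using y by (simp_all add: N_pos)
  have pr: "real (N m (y+2) * N m (y-1)) \<le> real (N m (y+1) * N m y)"
    using N_prod[OF y, of m] by (simp only: of_nat_le_iff)
  have b0: "0 \<le> b" unfolding b_def by simp
  have a1: "a \<le> 1" unfolding a_def using c1 by (simp add: divide_le_eq_1)
  have ba: "b \<le> a" unfolding a_def b_def using c1 pr
    by (simp add: divide_simps algebra_simps)
  have rb: "rel_pmf (\<lambda>u v. (v \<longrightarrow> u) \<and> u \<in> set_pmf (bernoulli_pmf a)) (bernoulli_pmf a) (bernoulli_pmf b)"
    using bern_couple[OF b0 ba a1] by (rule pmf.rel_mono_strong) auto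
  have "rel_pmf (adj m) (bind_pmf (bernoulli_pmf a) (\<lambda>u. if u then Pn m (y+1) else Pn m (y-1)))
                        (bind_pmf (bernoulli_pmf b) (\<lambda>u. if u then Pn m (y+2) else Pn m y))"
  proof (rule rel_pmf_bindI[OF rb])
    fix u v assume uv: "(v \<longrightarrow> u) \<and> u \<in> set_pmf (bernoulli_pmf a)"
    show "rel_pmf (adj m) (if u then Pn m (y+1) else Pn m (y-1)) (if v then Pn m (y+2) else Pn m y)"
    proof (cases u)
      case True
      show ?thesis
      proof (cases v)
        case True
        have e: "y+1+1 = y+2" by simp
        show ?thesis using Suc.IH[of "y+1"] y \<open>u\<close> True unfolding e by simp
      next
        case False
        show ?thesis using adj_flip[OF Suc.IH[OF y]] \<open>u\<close> False by simp
      qed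
    next
      case False
      hence v: "\<not> v" using uv by blast
      have "pmf (bernoulli_pmf a) False \<noteq> 0" using uv False by (simp add: set_pmf_iff)
      hence "a \<noteq> 1" using a1 b0 ba by auto
      hence "N m (y-1) \<noteq> 0" unfolding a_def using c1 by auto
      hence y1: "0 \<le> y - 1" using N_neg[of "y-1" m] by linarith
      show ?thesis using Suc.IH[OF y1] False v by simp
    qed
  qed
  hence "rel_pmf (adj (Suc m)) (map_pmf (Cons y) (bind_pmf (bernoulli_pmf a) (\<lambda>u. if u then Pn m (y+1) else Pn m (y-1))))
                        (map_pmf (Cons (y+1)) (bind_pmf (bernoulli_pmf b) (\<lambda>u. if u then Pn m (y+2) else Pn m y)))"
    unfolding pmf.rel_map by (rule pmf.rel_mono_strong) (auto intro: adj_Cons)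
  thus ?case using PA PB by simp
qed



lemma np_lower: "s \<in> nonneg_paths n y \<Longrightarrow> i \<le> n \<Longrightarrow> y - int i \<le> s!i"
proof (induction i)
  case 0 thus ?case by (simp add: nonneg_paths_def)
next
  case (Suc i)
  hence "\<bar>s!Suc i - s!i\<bar> = 1" by (simp add: nonneg_paths_def)
  thus ?case using Suc by auto
qed

lemma np_len: "s \<in> nonneg_paths n y \<Longrightarrow> length s = Suc n" by (simp add: nonneg_paths_def)

lemma shift_img:
  assumes "int n \<le> y" "0 \<le> c"
  shows "map (\<lambda>v. v + c) ` nonneg_paths n y = nonneg_paths n (y + c)"
proof (intro equalityI subsetI)
  fix t assume "t \<in> map (\<lambda>v. v + c) ` nonneg_paths n y"
  then obtain s where s: "s \<in> nonneg_paths n y" "t = map (\<lambda>v. v + c) s" by auto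
  thus "t \<in> nonneg_paths n (y + c)" using assms(2) by (auto simp: nonneg_paths_def)
next
  fix t assume t: "t \<in> nonneg_paths n (y + c)"
  let ?s = "map (\<lambda>v. v - c) t"
  have "?s \<in> nonneg_paths n y"
    unfolding nonneg_paths_def mem_Collect_eq
  proof (intro conjI allI impI)
    show "length ?s = Suc n" using t by (simp add: np_len)
    show "?s!0 = y" using t by (simp add: nonneg_paths_def)
    fix i assume i: "i \<le> n"
    have "y + c - int i \<le> t!i" using np_lower[OF t i] .
    thus "0 \<le> ?s!i" using i t assms by (simp add: np_len)
  next
    fix i assume "i < n" thus "\<bar>?s!Suc i - ?s!i\<bar> = 1" using t by (simp add: nonneg_paths_def)
  qed
  moreover have "t = map (\<lambda>v. v + c) ?s" by (simp add: map_idI)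
  ultimately show "t \<in> map (\<lambda>v. v + c) ` nonneg_paths n y" by blast
qed

lemma shift_Pn:
  assumes "int n \<le> y" "0 \<le> c"
  shows "map_pmf (map (\<lambda>v. v + c)) (Pn n y) = Pn n (y + c)"
  unfolding Pn_def
  by (subst map_pmf_of_set_inj) (use assms in \<open>auto simp: shift_img np_fin np_ne inj_on_def\<close>)

lemma tele:
  assumes "\<forall>x. \<forall>k\<le>n. \<bar>f (Suc x) ! k - f x ! k\<bar> = (1::int)" "k \<le> n"
  shows "\<bar>f (x + d) ! k - f x ! k\<bar> \<le> int d"
proof (induction d)
  case (Suc d)
  have "\<bar>f (Suc (x + d)) ! k - f (x+d) ! k\<bar> = 1" using assms by blast
  thus ?case using Suc by simp
qed simp

lemma tele2:
  assumes "\<forall>x. \<forall>k\<le>n. \<bar>f (Suc x) ! k - f x ! k\<bar> = (1::int)" "k \<le> n"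
  shows "\<bar>f x ! k - f y ! k\<bar> \<le> \<bar>int x - int y\<bar>"
proof (cases "x \<le> y")
  case True
  have "\<bar>f (x + (y - x)) ! k - f x ! k\<bar> \<le> int (y - x)" by (rule tele[OF assms])
  thus ?thesis using True by (simp add: abs_minus_commute of_nat_diff)
next
  case False
  have "\<bar>f (y + (x - y)) ! k - f y ! k\<bar> \<le> int (x - y)" by (rule tele[OF assms])
  thus ?thesis using False by (simp add: of_nat_diff)
qed

theorem propositionA5:
  fixes n :: nat
  shows "\<exists>(M :: (nat \<Rightarrow> int list) measure) (S :: nat \<Rightarrow> (nat \<Rightarrow> int list) \<Rightarrow> int list).
     prob_space M \<and>
     (\<forall>x. S x \<in> measurable M (count_space UNIV) \<and>
          distr M (count_space UNIV) (S x) = measure_pmf (Pn n (int x))) \<and>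
     (AE \<omega> in M. \<forall>x. \<forall>k\<le>n. \<bar>S (Suc x) \<omega> ! k - S x \<omega> ! k\<bar> = 1) \<and>
     (\<forall>x y. AE \<omega> in M. (MAX k\<in>{..n}. \<bar>S x \<omega> ! k - S y \<omega> ! k\<bar>) \<le> \<bar>int x - int y\<bar>)"
proof -
  have "\<And>x. rel_pmf (adj n) (Pn n (int x)) (Pn n (int (Suc x)))"
  proof -
    fix x show "rel_pmf (adj n) (Pn n (int x)) (Pn n (int (Suc x)))"
      using couple[of "int x" n] by (simp add: add.commute)
  qed
  from chain[of "adj n" "\<lambda>x. Pn n (int x)", OF this, of n]
  obtain G where G1: "\<forall>L\<in>set_pmf G. length L = Suc n \<and> (\<forall>i<n. adj n (L!i) (L!Suc i))"
    and G2: "\<forall>i\<le>n. map_pmf (\<lambda>L. L!i) G = Pn n (int i)" by blast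
  define \<Phi> where "\<Phi> L x = (if x \<le> n then L!x else map (\<lambda>v. v + int (x - n)) (L!n))" for L :: "int list list" and x
  define M where "M = measure_pmf (map_pmf \<Phi> G)"
  define S where "S x \<omega> = \<omega> x" for x and \<omega> :: "nat \<Rightarrow> int list"
  have inPn: "L!i \<in> nonneg_paths n (int i)" if "L \<in> set_pmf G" "i \<le> n" for L i
  proof -
    have "L!i \<in> set_pmf (map_pmf (\<lambda>L. L!i) G)" using that by auto
    thus ?thesis using G2 that(2) by (simp add: Pn_def np_fin np_ne)
  qed
  have marg: "map_pmf (\<lambda>L. \<Phi> L x) G = Pn n (int x)" for x
  proof (cases "x \<le> n")
    case True thus ?thesis using G2 by (simp add: \<Phi>_def)
  next
    case False
    have "map_pmf (\<lambda>L. \<Phi> L x) G = map_pmf (map (\<lambda>v. v + int (x - n))) (map_pmf (\<lambda>L. L!n) G)"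
      using False by (simp add: \<Phi>_def pmf.map_comp o_def)
    also have "\<dots> = Pn n (int n + int (x - n))" using G2 by (simp add: shift_Pn)
    also have "int n + int (x - n) = int x" using False by simp
    finally show ?thesis .
  qed
  have adjw: "\<forall>x. \<forall>k\<le>n. \<bar>\<Phi> L (Suc x) ! k - \<Phi> L x ! k\<bar> = 1" if L: "L \<in> set_pmf G" for L
  proof (intro allI impI)
    fix x k assume k: "k \<le> n"
    have lenn: "length (L!n) = Suc n" using inPn[OF L, of n] by (simp add: np_len)
    show "\<bar>\<Phi> L (Suc x) ! k - \<Phi> L x ! k\<bar> = 1"
    proof (cases "Suc x \<le> n")
      case True
      hence "adj n (L!x) (L!Suc x)" using G1 L by auto
      thus ?thesis using True k unfolding \<Phi>_def adj_def by (simp add: abs_minus_commute)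
    next
      case False
      show ?thesis
      proof (cases "x = n")
        case True thus ?thesis using k lenn by (simp add: \<Phi>_def)
      next
        case False
        hence "n < x" using \<open>\<not> Suc x \<le> n\<close> by simp
        hence "int (Suc x - n) = int (x - n) + 1" by simp
        thus ?thesis using \<open>n < x\<close> k lenn by (simp add: \<Phi>_def)
      qed
    qed
  qed
  have "prob_space M" unfolding M_def by (rule prob_space_measure_pmf)
  moreover have "\<forall>x. S x \<in> measurable M (count_space UNIV) \<and>
          distr M (count_space UNIV) (S x) = measure_pmf (Pn n (int x))"
  proof
    fix x
    have "distr M (count_space UNIV) (S x) = measure_pmf (map_pmf (S x) (map_pmf \<Phi> G))"
      unfolding M_def by (simp add: map_pmf_rep_eq)
    also have "map_pmf (S x) (map_pmf \<Phi> G) = Pn n (int x)"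
      using marg[of x] by (simp add: S_def pmf.map_comp o_def)
    finally show "S x \<in> measurable M (count_space UNIV) \<and>
          distr M (count_space UNIV) (S x) = measure_pmf (Pn n (int x))"
      unfolding M_def by simp
  qed
  moreover have AEa: "AE \<omega> in M. \<forall>x. \<forall>k\<le>n. \<bar>S (Suc x) \<omega> ! k - S x \<omega> ! k\<bar> = 1"
    unfolding M_def S_def by (auto simp: AE_measure_pmf_iff adjw)
  moreover have "\<forall>x y. AE \<omega> in M. (MAX k\<in>{..n}. \<bar>S x \<omega> ! k - S y \<omega> ! k\<bar>) \<le> \<bar>int x - int y\<bar>"
  proof (intro allI)
    fix x y
    show "AE \<omega> in M. (MAX k\<in>{..n}. \<bar>S x \<omega> ! k - S y \<omega> ! k\<bar>) \<le> \<bar>int x - int y\<bar>"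
      using AEa
    proof (rule AE_mp, intro AE_I2 impI)
      fix \<omega> assume h: "\<forall>x. \<forall>k\<le>n. \<bar>S (Suc x) \<omega> ! k - S x \<omega> ! k\<bar> = 1"
      have "\<forall>x. \<forall>k\<le>n. \<bar>\<omega> (Suc x) ! k - \<omega> x ! k\<bar> = 1" using h by (simp add: S_def)
      hence "\<forall>k\<in>{..n}. \<bar>S x \<omega> ! k - S y \<omega> ! k\<bar> \<le> \<bar>int x - int y\<bar>"
        unfolding S_def using tele2 by blast
      thus "(MAX k\<in>{..n}. \<bar>S x \<omega> ! k - S y \<omega> ! k\<bar>) \<le> \<bar>int x - int y\<bar>"
        by (subst Max_le_iff) auto
    qed
  qed
  ultimately show ?thesis by blast
qed

end
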